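(* Let $f_1,\dots,f_p$ be analytic on an open disk centered at $0$, $A_1,\dots,A_p\in\mathbb{C}^{n\times n}$, $k\ge1$, and $W\in\mathbb{C}^{n\times(k+1)}$. Let $Z=\sum_{m=1}^pA_mW(G_{k+1}\circ F_m)$, where $G_{k+1}$ and $F_m$ are as in the context. Let $1\le q\le k+1$ and let $U,V\in\mathbb{R}^{(k+1)\times q}$, with columns $u_j,v_j$, be factors of a best rank-$q$ approximation $UV^T$ of $G_{k+1}$. Then $$\tilde Z=\sum_{m=1}^pA_m\sum_{j=1}^qW\operatorname{diag}(u_j)F_m\operatorname{diag}(v_j)$$ satisfies $$\|Z-\tilde Z\|_F\le\Big(\sum_{m=1}^p\|A_mW\|_2\,\|F_m\|_F\Big)\sum_{j=q+1}^{k+1}\sigma_j(G_{k+1}),$$ where $\sigma_j(G_{k+1})$ are the singular values of $G_{k+1}$ in decreasing order.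
   Context: $\mathbf{C}=[c_{i,j}]_{i,j\ge1}$ is the infinite matrix determined by $c_{i,1}=1/(i+1)$ ($i\ge1$) and $c_{i-1,j}=\frac{j}{i}c_{i,j-1}$ ($i,j>1$). $G_{k+1}\in\mathbb{R}^{(k+1)\times(k+1)}$ has entries $g_{j,1}=g_{1,j}=1/j$ ($j=1,\dots,k+1$) and $g_{i,j}=c_{i-1,j}/j$ for $i,j\ge2$. $F_m\in\mathbb{C}^{(k+1)\times(k+1)}$ is the Hankel matrix with $(i,j)$ entry $f_m^{(i+j-1)}(0)$. $\circ$ is the Hadamard product; $\operatorname{diag}(u)$ is the diagonal matrix with diagonal $u$. *)

theory Defs
  imports "HOL-Analysis.Analysis" "Jordan_Normal_Form.Matrix" "Jordan_Normal_Form.Char_Poly"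
    "Jordan_Normal_Form.DL_Rank"
begin

(* The infinite matrix C = [c_{i,j}]_{i,j>=1} (1-based indices):
   c_{i,1} = 1/(i+1),  c_{i,j} = j/(i+1) * c_{i+1,j-1}  for j >= 2
   (equivalent to c_{i-1,j} = (j/i) c_{i,j-1} for i,j > 1). Index 0 is unused. *)
fun cC :: "nat \<Rightarrow> nat \<Rightarrow> real" where
  "cC i 0 = 0"
| "cC i (Suc 0) = 1 / real (i + 1)"
| "cC i (Suc (Suc j)) = real (Suc (Suc j)) / real (i + 1) * cC (Suc i) (Suc j)"

(* G_{K} as a K x K real matrix (0-based storage: entry (i,j) is g_{i+1,j+1}) *)
definition Gmat :: "nat \<Rightarrow> real mat" where
  "Gmat K = mat K K (\<lambda>(i,j).
     if i = 0 then 1 / real (j + 1)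
     else if j = 0 then 1 / real (i + 1)
     else cC i (j + 1) / real (j + 1))"

(* Hankel matrix of derivatives: (i,j) entry (1-based) f^{(i+j-1)}(0) *)
definition Fmat :: "nat \<Rightarrow> (complex \<Rightarrow> complex) \<Rightarrow> complex mat" where
  "Fmat K f = mat K K (\<lambda>(i,j). (deriv ^^ (i + j + 1)) f 0)"

definition hadamard :: "'a::times mat \<Rightarrow> 'a mat \<Rightarrow> 'a mat" where
  "hadamard A B = mat (dim_row A) (dim_col A) (\<lambda>(i,j). A $$ (i,j) * B $$ (i,j))"

definition mat_sum :: "nat \<Rightarrow> nat \<Rightarrow> 'b set \<Rightarrow> ('b \<Rightarrow> 'a::comm_monoid_add mat) \<Rightarrow> 'a mat" where
  "mat_sum nr nc I f = mat nr nc (\<lambda>(i,j). \<Sum>m\<in>I. f m $$ (i,j))"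

definition frob_norm :: "'a::real_normed_vector mat \<Rightarrow> real" where
  "frob_norm M = sqrt (\<Sum>i<dim_row M. \<Sum>j<dim_col M. (norm (M $$ (i,j)))\<^sup>2)"

definition vec_norm2 :: "'a::real_normed_vector vec \<Rightarrow> real" where
  "vec_norm2 x = sqrt (\<Sum>i<dim_vec x. (norm (x $ i))\<^sup>2)"

definition spec_norm :: "complex mat \<Rightarrow> real" where
  "spec_norm M = Sup {vec_norm2 (M *\<^sub>v x) | x. x \<in> carrier_vec (dim_col M) \<and> vec_norm2 x \<le> 1}"

definition singular_values :: "real mat \<Rightarrow> real list" where
  "singular_values G =
     rev (sorted_list_of_multiset (image_mset sqrt (proots (char_poly (transpose_mat G * G)))))"

end

theory Submission
  imports Defs
begin

definition on_sys :: "nat \<Rightarrow> (nat \<Rightarrow> nat \<Rightarrow> real) \<Rightarrow> bool" where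
  "on_sys n P \<longleftrightarrow> (\<forall>a<n. \<forall>c<n. (\<Sum>i<n. P a i * P c i) = (if a = c then 1 else 0))"

lemma on_sys_complete:
  assumes "on_sys n P" "i < n" "j < n"
  shows "(\<Sum>a<n. P a i * P a j) = (if i = j then 1 else 0)"
proof -
  define B where "B = mat n n (\<lambda>(i,a). P a i)"
  have B: "B \<in> carrier_mat n n" "transpose_mat B \<in> carrier_mat n n" unfolding B_def by auto
  have "transpose_mat B * B = 1\<^sub>m n"
  proof (rule eq_matI)
    fix a c assume ac: "a < dim_row (1\<^sub>m n)" "c < dim_col (1\<^sub>m n)"
    have "(transpose_mat B * B) $$ (a, c) = (\<Sum>i<n. P a i * P c i)"
      using ac unfolding B_def by (auto simp: scalar_prod_def atLeast0LessThan)
    also have "\<dots> = 1\<^sub>m n $$ (a, c)" using assms(1) ac unfolding on_sys_def by auto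
    finally show "(transpose_mat B * B) $$ (a, c) = 1\<^sub>m n $$ (a, c)" .
  qed (use B in auto)
  from mat_mult_left_right_inverse[OF B(2) B(1) this]
  have "B * transpose_mat B = 1\<^sub>m n" .
  hence "(B * transpose_mat B) $$ (i, j) = 1\<^sub>m n $$ (i, j)" by simp
  thus ?thesis using assms(2,3) unfolding B_def by (auto simp: scalar_prod_def atLeast0LessThan)
qed

lemma on_sys_expand:
  assumes "on_sys n P" "i < n"
  shows "y i = (\<Sum>d<n. (\<Sum>l<n. P d l * y l) * P d i)"
proof -
  have "(\<Sum>d<n. (\<Sum>l<n. P d l * y l) * P d i) = (\<Sum>l<n. y l * (\<Sum>d<n. P d l * P d i))"
    by (simp add: sum_distrib_left sum_distrib_right algebra_simps, rule sum.swap)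
  also have "\<dots> = (\<Sum>l<n. y l * (if l = i then 1 else 0))"
    by (rule sum.cong, simp, subst on_sys_complete[OF assms(1)], use assms in auto)
  also have "\<dots> = y i" using assms(2) by (simp add: sum.delta' if_distrib cong: if_cong)
  finally show ?thesis by simp
qed

lemma delta_sum1:
  assumes "(a::nat) < n"
  shows "(\<Sum>i<n. (if a = i then 1 else 0) * f i) = (f a::real)"
proof -
  have "(\<Sum>i<n. (if a = i then 1 else 0) * f i) = (\<Sum>i<n. if a = i then f a else 0)"
    by (rule sum.cong) auto
  also have "\<dots> = f a" using assms by (simp add: sum.delta'[OF finite_lessThan])
  finally show ?thesis .
qed

lemma delta_sum2:
  assumes "(a::nat) < n" "c < n"
  shows "(\<Sum>i<n. (if a = i then 1 else 0) * (if c = i then 1 else 0)) = (if a = c then 1 else (0::real))"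
  using delta_sum1[OF assms(1), of "\<lambda>i. if c = i then 1 else 0"] by simp

lemma householder_basis:
  fixes x :: "nat \<Rightarrow> real"
  assumes x1: "(\<Sum>i<n. (x i)^2) = 1" and n: "n > 0"
  shows "\<exists>b. on_sys n b \<and> (\<forall>i<n. b 0 i = x i)"
proof -
  define w where "w i = x i - (if i = 0 then 1 else 0)" for i
  define d where "d = (\<Sum>i<n. (w i)^2)"
  show ?thesis
  proof (cases "d = 0")
    case True
    have "\<forall>i\<in>{..<n}. (w i)^2 = 0"
      using True unfolding d_def by (subst sum_nonneg_eq_0_iff[symmetric], auto)
    hence w0: "\<And>i. i < n \<Longrightarrow> x i = (if i = 0 then 1 else 0)" unfolding w_def by auto
    define b where "b a i = (if a = i then 1 else (0::real))" for a i :: nat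
    have "on_sys n b" unfolding on_sys_def b_def
      by (intro allI impI delta_sum2)
    moreover have "\<forall>i<n. b 0 i = x i" using w0 unfolding b_def by auto
    ultimately show ?thesis by blast
  next
    case False
    have d2: "d = 2 - 2 * x 0"
    proof -
      have wi: "\<And>i. (w i)^2 = (x i)^2 - 2*(x i * (if i=0 then 1 else 0)) + (if i = 0 then 1 else 0)"
        unfolding w_def by (auto simp: power2_eq_square algebra_simps)
      have "d = (\<Sum>i<n. (x i)^2) - 2 * (\<Sum>i<n. x i * (if i = 0 then 1 else 0)) + (\<Sum>i<n. (if i = 0 then 1 else 0))"
        unfolding d_def wi by (simp add: sum.distrib sum_subtractf sum_distrib_left)
      also have "\<dots> = 2 - 2 * x 0" using n x1 by (simp add: if_distrib sum.delta cong: if_cong)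
      finally show ?thesis .
    qed
    define t where "t = 2 / d"
    have td: "t^2 * d = 2 * t" unfolding t_def using False by (simp add: power2_eq_square field_simps)
    define b where "b a i = (if a = i then 1 else 0) - t * w a * w i" for a i
    have "on_sys n b" unfolding on_sys_def
    proof (intro allI impI)
      fix a c assume ac: "a < n" "c < n"
      have pt: "b a i * b c i = (if a = i then 1 else 0) * (if c = i then 1 else 0)
          - t * w c * ((if a = i then 1 else 0) * w i) - t * w a * ((if c = i then 1 else 0) * w i)
          + t^2 * w a * w c * (w i)^2" for i
        unfolding b_def by (simp add: algebra_simps power2_eq_square)
      have "(\<Sum>i<n. b a i * b c i) = (if a = c then 1 else 0) - t * w c * w a - t * w a * w c
          + t^2 * w a * w c * d"
        unfolding pt d_def using ac
        by (simp add: sum.distrib sum_subtractf sum_distrib_left[symmetric] delta_sum1 delta_sum2)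
      also have "\<dots> = (if a = c then 1 else 0)"
        using td by (simp add: algebra_simps)
      finally show "(\<Sum>i<n. b a i * b c i) = (if a = c then 1 else 0)" .
    qed
    moreover have "\<forall>i<n. b 0 i = x i"
    proof (intro allI impI)
      fix i assume "i < n"
      have "w 0 = x 0 - 1" unfolding w_def by simp
      hence "- t * w 0 = 1" using d2 False unfolding t_def by (simp add: field_simps)
      hence "b 0 i = (if 0 = i then 1 else 0) + w i" unfolding b_def
        by (metis add_uminus_conv_diff minus_mult_left mult.commute mult_1 mult.assoc)
      thus "b 0 i = x i" unfolding w_def by auto
    qed
    ultimately show ?thesis by blast
  qed
qed


lemma poly_of_real_map: "poly (map_poly of_real p) (of_real x) = (of_real (poly p x) :: complex)"
  by (induction p) (auto simp: map_poly_pCons)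

lemma mult_mat_vec_sum:
  assumes "A \<in> carrier_mat n m" "v \<in> carrier_vec m" "i < n"
  shows "(A *\<^sub>v v) $ i = (\<Sum>j<m. A $$ (i,j) * v $ j)"
  using assms by (auto simp: scalar_prod_def atLeast0LessThan)

lemma sym_real_eigen:
  fixes S :: "real mat"
  assumes S: "S \<in> carrier_mat n n" and sym: "\<And>i j. i<n \<Longrightarrow> j<n \<Longrightarrow> S$$(i,j) = S$$(j,i)"
    and n: "n > 0"
  shows "\<exists>\<mu> v. v \<in> carrier_vec n \<and> v \<noteq> 0\<^sub>v n \<and> S *\<^sub>v v = \<mu> \<cdot>\<^sub>v v"
proof -
  define Sc where "Sc = map_mat complex_of_real S"
  have Sc: "Sc \<in> carrier_mat n n" using S unfolding Sc_def by auto
  have cp: "char_poly Sc = map_poly of_real (char_poly S)"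
    unfolding Sc_def by (rule of_real_hom.char_poly_hom[OF S])
  obtain as where as: "char_poly Sc = (\<Prod>a\<leftarrow>as. [:- a, 1:])" and len: "length as = n"
    using char_poly_factorized[OF Sc] by auto
  define z where "z = hd as"
  have zin: "z \<in> set as" using len n unfolding z_def by (cases as) auto
  have "poly (char_poly Sc) z = 0"
    unfolding as poly_prod_list prod_list_zero_iff using zin by force
  hence "eigenvalue Sc z" using eigenvalue_root_char_poly[OF Sc] by simp
  then obtain v where v: "v \<in> carrier_vec n" "v \<noteq> 0\<^sub>v n" "Sc *\<^sub>v v = z \<cdot>\<^sub>v v"
    unfolding eigenvalue_def eigenvector_def using Sc by auto
  have Sce: "\<And>i j. i<n \<Longrightarrow> j<n \<Longrightarrow> Sc$$(i,j) = of_real (S$$(i,j))"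
    using S unfolding Sc_def by auto
  define Q where "Q = (\<Sum>i<n. cnj (v $ i) * (Sc *\<^sub>v v) $ i)"
  define r where "r = (\<Sum>i<n. (cmod (v $ i))^2)"
  have Q1: "Q = z * of_real r"
  proof -
    have "Q = (\<Sum>i<n. z * (v $ i * cnj (v $ i)))" unfolding Q_def v(3)
      using v(1) by (intro sum.cong) auto
    also have "\<dots> = z * of_real r" unfolding r_def of_real_sum sum_distrib_left
      by (intro sum.cong refl, subst complex_norm_square, simp)
    finally show ?thesis .
  qed
  have Q2: "Q = (\<Sum>i<n. \<Sum>j<n. cnj (v $ i) * of_real (S $$ (i,j)) * v $ j)"
    unfolding Q_def
    by (intro sum.cong refl, subst mult_mat_vec_sum[OF Sc v(1)], simp,
        simp add: sum_distrib_left mult.assoc, intro sum.cong refl, simp add: Sce)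
  have "cnj Q = (\<Sum>i<n. \<Sum>j<n. v $ i * of_real (S $$ (i,j)) * cnj (v $ j))"
    unfolding Q2 by simp
  also have "\<dots> = (\<Sum>j<n. \<Sum>i<n. v $ i * of_real (S $$ (i,j)) * cnj (v $ j))"
    by (rule sum.swap)
  also have "\<dots> = Q" unfolding Q2
    by (intro sum.cong refl, simp add: sym mult.commute)
  finally have "cnj Q = Q" .
  hence ImQ: "Im Q = 0" by (metis complex_cnj_zero_iff complex_eq_iff cnj.simps(2) neg_equal_zero)
  have "r > 0"
  proof -
    obtain i where i: "i < n" "v $ i \<noteq> 0" using v(1,2) by (metis eq_vecI carrier_vecD index_zero_vec)
    have "r \<ge> (cmod (v $ i))^2" unfolding r_def
      by (rule member_le_sum) (use i in auto)
    moreover have "(cmod (v $ i))^2 > 0" using i by simp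
    ultimately show ?thesis by linarith
  qed
  from ImQ Q1 have "Im z * r = 0" by simp
  with \<open>r > 0\<close> have Imz: "Im z = 0" by simp
  hence zr: "z = of_real (Re z)" by (simp add: complex_eq_iff)
  have "of_real (poly (char_poly S) (Re z)) = (0::complex)"
    using \<open>poly (char_poly Sc) z = 0\<close> unfolding cp poly_of_real_map[symmetric] using zr by simp
  hence "poly (char_poly S) (Re z) = 0" by simp
  hence "eigenvalue S (Re z)" using eigenvalue_root_char_poly[OF S] by simp
  thus ?thesis unfolding eigenvalue_def eigenvector_def using S by auto
qed


lemma sum_combo:
  fixes y z :: "'b \<Rightarrow> real"
  assumes "finite I" "finite C" "finite D"
  shows "(\<Sum>i\<in>I. (\<Sum>c\<in>C. y c * f c i) * (\<Sum>d\<in>D. z d * g d i))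
       = (\<Sum>c\<in>C. \<Sum>d\<in>D. y c * z d * (\<Sum>i\<in>I. f c i * g d i))"
proof -
  have "(\<Sum>i\<in>I. (\<Sum>c\<in>C. y c * f c i) * (\<Sum>d\<in>D. z d * g d i))
      = (\<Sum>i\<in>I. \<Sum>c\<in>C. \<Sum>d\<in>D. y c * z d * (f c i * g d i))"
    by (simp add: sum_product algebra_simps)
  also have "\<dots> = (\<Sum>c\<in>C. \<Sum>i\<in>I. \<Sum>d\<in>D. y c * z d * (f c i * g d i))"
    by (rule sum.swap)
  also have "\<dots> = (\<Sum>c\<in>C. \<Sum>d\<in>D. \<Sum>i\<in>I. y c * z d * (f c i * g d i))"
    by (rule sum.cong, simp, rule sum.swap)
  also have "\<dots> = (\<Sum>c\<in>C. \<Sum>d\<in>D. y c * z d * (\<Sum>i\<in>I. f c i * g d i))"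
    by (simp add: sum_distrib_left)
  finally show ?thesis .
qed

lemma sum_combo1:
  fixes z :: "'b \<Rightarrow> real"
  assumes "finite I" "finite D"
  shows "(\<Sum>i\<in>I. f i * (\<Sum>d\<in>D. z d * g d i)) = (\<Sum>d\<in>D. z d * (\<Sum>i\<in>I. f i * g d i))"
proof -
  have "(\<Sum>i\<in>I. f i * (\<Sum>d\<in>D. z d * g d i)) = (\<Sum>i\<in>I. \<Sum>d\<in>D. z d * (f i * g d i))"
    by (simp add: sum_distrib_left algebra_simps)
  also have "\<dots> = (\<Sum>d\<in>D. \<Sum>i\<in>I. z d * (f i * g d i))" by (rule sum.swap)
  also have "\<dots> = (\<Sum>d\<in>D. z d * (\<Sum>i\<in>I. f i * g d i))" by (simp add: sum_distrib_left)
  finally show ?thesis .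
qed

lemma spectral_fun:
  fixes S :: "real mat"
  assumes "S \<in> carrier_mat n n" "\<And>i j. i<n \<Longrightarrow> j<n \<Longrightarrow> S$$(i,j) = S$$(j,i)"
  shows "\<exists>\<mu> P. on_sys n P \<and> (\<forall>a<n. \<forall>i<n. (\<Sum>j<n. S$$(i,j) * P a j) = \<mu> a * P a i)"
  using assms
proof (induction n arbitrary: S)
  case 0 then show ?case by (auto simp: on_sys_def)
next
  case (Suc m)
  define N where "N = Suc m"
  have S: "S \<in> carrier_mat N N" and sym: "\<And>i j. i<N \<Longrightarrow> j<N \<Longrightarrow> S$$(i,j) = S$$(j,i)"
    using Suc.prems unfolding N_def by auto
  obtain \<mu>0 v where v: "v \<in> carrier_vec N" "v \<noteq> 0\<^sub>v N" "S *\<^sub>v v = \<mu>0 \<cdot>\<^sub>v v"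
    using sym_real_eigen[OF S sym] unfolding N_def by auto
  define nv where "nv = sqrt (\<Sum>i<N. (v$i)^2)"
  have pos: "(\<Sum>i<N. (v$i)^2) > 0"
  proof -
    obtain i where i: "i < N" "v $ i \<noteq> 0" using v(1,2) by (metis eq_vecI carrier_vecD index_zero_vec)
    have "(\<Sum>i<N. (v$i)^2) \<ge> (v $ i)^2" by (rule member_le_sum) (use i in auto)
    moreover have "(v $ i)^2 > 0" using i by simp
    ultimately show ?thesis by linarith
  qed
  hence nv: "nv > 0" unfolding nv_def by simp
  define x where "x i = v$i / nv" for i
  have x1: "(\<Sum>i<N. (x i)^2) = 1"
    unfolding x_def power_divide sum_divide_distrib[symmetric] nv_def using pos by simp
  have xe: "(\<Sum>j<N. S$$(i,j) * x j) = \<mu>0 * x i" if i: "i < N" for i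
  proof -
    have "(S *\<^sub>v v) $ i = \<mu>0 * v $ i" using v(1,3) i by (metis carrier_vecD index_smult_vec(1))
    hence "(\<Sum>j<N. S$$(i,j) * v $ j) = \<mu>0 * v $ i" using mult_mat_vec_sum[OF S v(1) i] by simp
    hence "(\<Sum>j<N. S$$(i,j) * v $ j) / nv = \<mu>0 * v $ i / nv" by simp
    thus ?thesis unfolding x_def sum_divide_distrib by (simp add: algebra_simps)
  qed
  obtain b where b: "on_sys N b" and b0: "\<And>i. i<N \<Longrightarrow> b 0 i = x i"
    using householder_basis[OF x1] unfolding N_def by auto
  define S' where "S' = mat m m (\<lambda>(i,j). \<Sum>k<N. \<Sum>l<N. b (Suc i) k * S$$(k,l) * b (Suc j) l)"
  have S': "S' \<in> carrier_mat m m" unfolding S'_def by simp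
  have sym': "S'$$(i,j) = S'$$(j,i)" if "i<m" "j<m" for i j
  proof -
    have "S'$$(i,j) = (\<Sum>k<N. \<Sum>l<N. b (Suc i) k * S$$(k,l) * b (Suc j) l)"
      using that unfolding S'_def by simp
    also have "\<dots> = (\<Sum>l<N. \<Sum>k<N. b (Suc i) k * S$$(k,l) * b (Suc j) l)" by (rule sum.swap)
    also have "\<dots> = (\<Sum>l<N. \<Sum>k<N. b (Suc j) l * S$$(l,k) * b (Suc i) k)"
      by (intro sum.cong refl) (simp add: sym mult.commute mult.left_commute)
    also have "\<dots> = S'$$(j,i)" using that unfolding S'_def by simp
    finally show ?thesis .
  qed
  obtain \<mu>' P' where P': "on_sys m P'"
    and e': "\<And>a i. a<m \<Longrightarrow> i<m \<Longrightarrow> (\<Sum>j<m. S'$$(i,j) * P' a j) = \<mu>' a * P' a i"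
    using Suc.IH[OF S' sym'] by blast
  define \<mu> where "\<mu> a = (if a = 0 then \<mu>0 else \<mu>' (a - 1))" for a
  define P where "P a i = (if a = 0 then x i else \<Sum>c<m. P' (a-1) c * b (Suc c) i)" for a i
  have bo: "(\<Sum>i<N. b c i * b d i) = (if c = d then 1 else 0)" if "c < N" "d < N" for c d
    using b that unfolding on_sys_def by auto
  have L1: "(\<Sum>i<N. (\<Sum>c<m. y c * b (Suc c) i) * (\<Sum>c<m. z c * b (Suc c) i)) = (\<Sum>c<m. y c * z c)"
    for y z
  proof -
    have "(\<Sum>i<N. (\<Sum>c<m. y c * b (Suc c) i) * (\<Sum>c<m. z c * b (Suc c) i))
       = (\<Sum>c<m. \<Sum>d<m. y c * z d * (\<Sum>i<N. b (Suc c) i * b (Suc d) i))"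
      by (rule sum_combo) auto
    also have "\<dots> = (\<Sum>c<m. \<Sum>d<m. y c * ((if c = d then 1 else 0) * z d))"
      by (intro sum.cong refl, subst bo) (auto simp: N_def)
    also have "\<dots> = (\<Sum>c<m. y c * z c)"
      by (intro sum.cong refl) (simp only: sum_distrib_left[symmetric], subst delta_sum1, auto)
    finally show ?thesis .
  qed
  have L2: "(\<Sum>i<N. x i * (\<Sum>c<m. z c * b (Suc c) i)) = 0" for z
  proof -
    have "(\<Sum>i<N. x i * (\<Sum>c<m. z c * b (Suc c) i)) = (\<Sum>c<m. z c * (\<Sum>i<N. x i * b (Suc c) i))"
      by (rule sum_combo1) auto
    also have "\<dots> = (\<Sum>c<m. z c * (\<Sum>i<N. b 0 i * b (Suc c) i))"
      by (intro sum.cong refl) (simp add: b0)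
    also have "\<dots> = 0" by (intro sum.neutral ballI) (subst bo, auto simp: N_def)
    finally show ?thesis .
  qed
  have onP: "on_sys N P" unfolding on_sys_def
  proof (intro allI impI)
    fix a c assume ac: "a < N" "c < N"
    show "(\<Sum>i<N. P a i * P c i) = (if a = c then 1 else 0)"
    proof (cases "a = 0"; cases "c = 0")
      assume "a = 0" "c = 0"
      thus ?thesis using x1 unfolding P_def by (simp add: power2_eq_square)
    next
      assume "a = 0" "c \<noteq> 0"
      thus ?thesis unfolding P_def using L2 by simp
    next
      assume asm: "a \<noteq> 0" "c = 0"
      have "P a i * P c i = x i * (\<Sum>d<m. P' (a-1) d * b (Suc d) i)" for i
        using asm unfolding P_def by (simp add: mult.commute)
      hence "(\<Sum>i<N. P a i * P c i) = (\<Sum>i<N. x i * (\<Sum>d<m. P' (a-1) d * b (Suc d) i))" by simp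
      thus ?thesis using L2 asm by simp
    next
      assume "a \<noteq> 0" "c \<noteq> 0"
      hence "(\<Sum>i<N. P a i * P c i) = (\<Sum>d<m. P' (a-1) d * P' (c-1) d)"
        unfolding P_def using L1 by simp
      also have "\<dots> = (if a = c then 1 else 0)"
        using P' ac \<open>a \<noteq> 0\<close> \<open>c \<noteq> 0\<close> unfolding on_sys_def N_def by auto
      finally show ?thesis .
    qed
  qed
  have split: "(\<Sum>d<N. f d) = f 0 + (\<Sum>d<m. f (Suc d))" for f :: "nat \<Rightarrow> real"
    unfolding N_def by (rule sum.lessThan_Suc_shift)
  have E1: "(\<Sum>j<N. S$$(i,j) * b (Suc c) j) = (\<Sum>d<m. S'$$(d,c) * b (Suc d) i)"
    if ic: "i < N" "c < m" for i c
  proof -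
    define y where "y i = (\<Sum>j<N. S$$(i,j) * b (Suc c) j)" for i
    have coef: "(\<Sum>l<N. b d l * y l) = (\<Sum>k<N. \<Sum>l<N. b d k * S$$(k,l) * b (Suc c) l)" for d
      unfolding y_def by (simp add: sum_distrib_left mult.assoc)
    have c0: "(\<Sum>l<N. b 0 l * y l) = 0"
    proof -
      have "(\<Sum>l<N. b 0 l * y l) = (\<Sum>l<N. \<Sum>k<N. b 0 k * S$$(k,l) * b (Suc c) l)"
        unfolding coef by (rule sum.swap)
      also have "\<dots> = (\<Sum>l<N. (\<Sum>k<N. S$$(l,k) * x k) * b (Suc c) l)"
      proof (intro sum.cong refl)
        fix l assume l: "l \<in> {..<N}"
        have "b 0 k * S$$(k,l) * b (Suc c) l = S$$(l,k) * x k * b (Suc c) l" if "k \<in> {..<N}" for k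
          using that l b0[of k] sym[of k l] by simp
        thus "(\<Sum>k<N. b 0 k * S$$(k,l) * b (Suc c) l) = (\<Sum>k<N. S$$(l,k) * x k) * b (Suc c) l"
          unfolding sum_distrib_right by (intro sum.cong refl) auto
      qed
      also have "\<dots> = (\<Sum>l<N. \<mu>0 * (b 0 l * b (Suc c) l))"
        by (intro sum.cong refl) (simp add: xe b0)
      also have "\<dots> = 0" unfolding sum_distrib_left[symmetric] using bo[of 0 "Suc c"] ic
        by (simp add: N_def)
      finally show ?thesis .
    qed
    have "y i = (\<Sum>d<N. (\<Sum>l<N. b d l * y l) * b d i)" by (rule on_sys_expand[OF b ic(1)])
    also have "\<dots> = (\<Sum>d<m. (\<Sum>l<N. b (Suc d) l * y l) * b (Suc d) i)"
      by (subst split) (simp add: c0)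
    also have "\<dots> = (\<Sum>d<m. S'$$(d,c) * b (Suc d) i)"
      by (intro sum.cong refl) (use ic in \<open>simp add: coef S'_def\<close>)
    finally show ?thesis unfolding y_def .
  qed
  have eP: "(\<Sum>j<N. S$$(i,j) * P a j) = \<mu> a * P a i" if ai: "a < N" "i < N" for a i
  proof (cases "a = 0")
    case True thus ?thesis using xe[OF ai(2)] unfolding P_def \<mu>_def by simp
  next
    case False
    define a' where "a' = a - 1"
    have a': "a' < m" using ai False unfolding a'_def N_def by auto
    have "(\<Sum>j<N. S$$(i,j) * P a j) = (\<Sum>j<N. S$$(i,j) * (\<Sum>c<m. P' a' c * b (Suc c) j))"
      unfolding P_def a'_def using False by simp
    also have "\<dots> = (\<Sum>c<m. P' a' c * (\<Sum>j<N. S$$(i,j) * b (Suc c) j))"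
      by (rule sum_combo1) auto
    also have "\<dots> = (\<Sum>c<m. P' a' c * (\<Sum>d<m. S'$$(d,c) * b (Suc d) i))"
      by (intro sum.cong refl) (simp add: E1 ai)
    also have "\<dots> = (\<Sum>d<m. (\<Sum>c<m. S'$$(d,c) * P' a' c) * b (Suc d) i)"
      by (simp add: sum_distrib_left sum_distrib_right algebra_simps, rule sum.swap)
    also have "\<dots> = (\<Sum>d<m. \<mu>' a' * P' a' d * b (Suc d) i)"
      by (intro sum.cong refl) (simp add: e' a')
    also have "\<dots> = \<mu> a * P a i"
      unfolding P_def \<mu>_def a'_def using False by (simp add: sum_distrib_left mult.assoc)
    finally show ?thesis .
  qed
  show ?case using onP eP unfolding N_def by blast
qed


lemma on_sys_char_poly:
  fixes S :: "real mat"
  assumes S: "S \<in> carrier_mat N N" and on: "on_sys N P"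
    and e: "\<And>a i. a<N \<Longrightarrow> i<N \<Longrightarrow> (\<Sum>j<N. S$$(i,j) * P a j) = \<mu> a * P a i"
  shows "char_poly S = (\<Prod>a\<leftarrow>map \<mu> [0..<N]. [:-a,1:])"
proof -
  define B where "B = mat N N (\<lambda>(i,a). P a i)"
  define D where "D = mat N N (\<lambda>(i,j). if i = j then \<mu> i else 0)"
  have B: "B \<in> carrier_mat N N" "transpose_mat B \<in> carrier_mat N N" unfolding B_def by auto
  have D: "D \<in> carrier_mat N N" unfolding D_def by auto
  have BBT: "B * transpose_mat B = 1\<^sub>m N"
    by (rule eq_matI) (auto simp: B_def scalar_prod_def atLeast0LessThan on_sys_complete[OF on])
  have BTB: "transpose_mat B * B = 1\<^sub>m N"
    by (rule eq_matI) (use on in \<open>auto simp: B_def scalar_prod_def atLeast0LessThan on_sys_def\<close>)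
  have BD: "(B * D) $$ (i,a) = P a i * \<mu> a" if "i < N" "a < N" for i a
  proof -
    have "(B * D) $$ (i,a) = (\<Sum>c<N. P c i * (if c = a then \<mu> c else 0))"
      using that by (simp add: B_def D_def scalar_prod_def atLeast0LessThan)
    also have "\<dots> = P a i * \<mu> a" using that by (simp add: if_distrib sum.delta cong: if_cong)
    finally show ?thesis .
  qed
  have SBDB: "S = B * D * transpose_mat B"
  proof (rule eq_matI)
    fix i j assume ij: "i < dim_row (B * D * transpose_mat B)" "j < dim_col (B * D * transpose_mat B)"
    hence ij: "i < N" "j < N" using B by auto
    have "(B * D * transpose_mat B) $$ (i,j) = (\<Sum>a<N. (B * D) $$ (i,a) * P a j)"
      using ij B D by (simp add: scalar_prod_def atLeast0LessThan B_def)
    also have "\<dots> = (\<Sum>a<N. (\<Sum>l<N. P a l * S$$(i,l)) * P a j)"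
    proof (intro sum.cong refl)
      fix a assume "a \<in> {..<N}"
      hence a: "a < N" by simp
      have "(\<Sum>l<N. P a l * S$$(i,l)) = \<mu> a * P a i"
        using e[OF a ij(1)] by (simp add: mult.commute)
      thus "(B * D) $$ (i,a) * P a j = (\<Sum>l<N. P a l * S$$(i,l)) * P a j"
        using BD[OF ij(1) a] by (simp add: mult.commute)
    qed
    also have "\<dots> = S $$ (i,j)" by (rule on_sys_expand[OF on ij(2), symmetric])
    finally show "S $$ (i,j) = (B * D * transpose_mat B) $$ (i,j)" by simp
  qed (use S B D in auto)
  have "similar_mat S D" unfolding similar_mat_def similar_mat_wit_def Let_def
    using S B D BBT BTB SBDB by (intro exI[of _ B] exI[of _ "transpose_mat B"]) auto
  hence "char_poly S = char_poly D" by (rule char_poly_similar)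
  also have "\<dots> = (\<Prod>a\<leftarrow>diag_mat D. [:-a,1:])"
    by (rule char_poly_upper_triangular[OF D]) (auto simp: upper_triangular_def D_def)
  also have "diag_mat D = map \<mu> [0..<N]" unfolding diag_mat_def D_def by auto
  finally show ?thesis .
qed

lemma proots_linear_prod: "proots (\<Prod>a\<leftarrow>xs. [:-a,1:]) = mset (xs :: real list)"
proof (induction xs)
  case Nil thus ?case by simp
next
  case (Cons a xs)
  have "(\<Prod>a\<leftarrow>a # xs. [:-a,1:]) = [:-a,1:] * (\<Prod>a\<leftarrow>xs. [:-a,1:])" by simp
  moreover have "(\<Prod>a\<leftarrow>xs. [:-a,1:]) \<noteq> 0" by (auto simp: prod_list_zero_iff)
  hence "proots ([:-a,1:] * (\<Prod>a\<leftarrow>xs. [:-a,1:])) = proots [:-a,1:] + proots (\<Prod>a\<leftarrow>xs. [:-a,1:])"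
    by (intro proots_mult) auto
  moreover have "proots [:-a,1:] = {#a#}" using proots_linear_factor[of "-a"] by simp
  ultimately show ?case using Cons by (simp del: pCons_one)
qed


lemma spectral_sorted:
  fixes S :: "real mat"
  assumes S: "S \<in> carrier_mat N N" and sym: "\<And>i j. i<N \<Longrightarrow> j<N \<Longrightarrow> S$$(i,j) = S$$(j,i)"
  shows "\<exists>\<mu> P. on_sys N P \<and> (\<forall>a<N. \<forall>i<N. (\<Sum>j<N. S$$(i,j) * P a j) = \<mu> a * P a i)
     \<and> (\<forall>a c. a \<le> c \<longrightarrow> c < N \<longrightarrow> \<mu> c \<le> \<mu> a)"
proof -
  obtain \<mu> P where on: "on_sys N P" and e: "\<forall>a<N. \<forall>i<N. (\<Sum>j<N. S$$(i,j) * P a j) = \<mu> a * P a i"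
    using spectral_fun[OF S sym] by blast
  define xs where "xs = sort_key (\<lambda>a. - \<mu> a) [0..<N]"
  have mxs: "mset xs = mset [0..<N]" unfolding xs_def by simp
  hence len: "length xs = N" by (metis length_upt minus_nat.diff_0 size_mset)
  have setxs: "set xs = {..<N}" using mxs by (metis atLeast0LessThan atLeastLessThan_upt set_mset_mset)
  have dist: "distinct xs" unfolding xs_def by simp
  have sorted: "sorted (map (\<lambda>a. - \<mu> a) xs)" unfolding xs_def by (rule sorted_sort_key)
  define \<pi> where "\<pi> a = xs ! a" for a
  have \<pi>lt: "\<pi> a < N" if "a < N" for a using that len setxs unfolding \<pi>_def
    by (metis lessThan_iff nth_mem)
  have \<pi>inj: "\<pi> a = \<pi> c \<longleftrightarrow> a = c" if "a < N" "c < N" for a c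
    using that len dist unfolding \<pi>_def by (simp add: nth_eq_iff_index_eq)
  have mono: "\<mu> (\<pi> c) \<le> \<mu> (\<pi> a)" if "a \<le> c" "c < N" for a c
  proof -
    have "(map (\<lambda>a. - \<mu> a) xs) ! a \<le> (map (\<lambda>a. - \<mu> a) xs) ! c"
      by (rule sorted_nth_mono[OF sorted that(1)]) (use that len in simp)
    thus ?thesis using that len unfolding \<pi>_def by simp
  qed
  define \<mu>2 where "\<mu>2 a = \<mu> (\<pi> a)" for a
  define P2 where "P2 a = P (\<pi> a)" for a
  have "on_sys N P2" unfolding on_sys_def P2_def
  proof (intro allI impI)
    fix a c assume "a < N" "c < N"
    thus "(\<Sum>i<N. P (\<pi> a) i * P (\<pi> c) i) = (if a = c then 1 else 0)"
      using on \<pi>lt \<pi>inj unfolding on_sys_def by auto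
  qed
  moreover have "\<forall>a<N. \<forall>i<N. (\<Sum>j<N. S$$(i,j) * P2 a j) = \<mu>2 a * P2 a i"
    unfolding P2_def \<mu>2_def using e \<pi>lt by auto
  moreover have "\<forall>a c. a \<le> c \<longrightarrow> c < N \<longrightarrow> \<mu>2 c \<le> \<mu>2 a" unfolding \<mu>2_def using mono by auto
  ultimately show ?thesis by blast
qed

lemma sv_eq:
  assumes cp: "char_poly (transpose_mat G * G) = (\<Prod>a\<leftarrow>map \<mu> [0..<N]. [:-a,1:])"
    and mono: "\<forall>a c. a \<le> c \<longrightarrow> c < N \<longrightarrow> \<mu> c \<le> \<mu> a"
  shows "singular_values G = map (\<lambda>a. sqrt (\<mu> a)) [0..<N]"
proof -
  define ys where "ys = map (\<lambda>a. sqrt (\<mu> a)) [0..<N]"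
  have "image_mset sqrt (proots (char_poly (transpose_mat G * G))) = mset ys"
    unfolding cp proots_linear_prod ys_def by (simp add: multiset.map_comp o_def)
  hence "singular_values G = rev (sort ys)" unfolding singular_values_def by simp
  also have "sort ys = rev ys"
  proof (rule properties_for_sort)
    show "mset (rev ys) = mset ys" by simp
    show "sorted (rev ys)" unfolding sorted_rev_iff_nth_mono ys_def using mono by simp
  qed
  finally show ?thesis unfolding ys_def by simp
qed

lemma parseval:
  assumes on: "on_sys N P"
  shows "(\<Sum>j<N. (y j)^2) = (\<Sum>a<N. (\<Sum>j<N. P a j * y j)^2)"
proof -
  have "(\<Sum>a<N. (\<Sum>j<N. P a j * y j)^2) = (\<Sum>a<N. (\<Sum>j<N. y j * P a j) * (\<Sum>j<N. y j * P a j))"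
    by (simp add: power2_eq_square mult.commute)
  also have "\<dots> = (\<Sum>c<N. \<Sum>d<N. y c * y d * (\<Sum>a<N. P a c * P a d))"
    by (rule sum_combo) auto
  also have "\<dots> = (\<Sum>c<N. \<Sum>d<N. y c * ((if c = d then 1 else 0) * y d))"
    by (intro sum.cong refl, subst on_sys_complete[OF on]) auto
  also have "\<dots> = (\<Sum>c<N. y c * y c)"
    by (intro sum.cong refl) (simp only: sum_distrib_left[symmetric], subst delta_sum1, auto)
  finally show ?thesis by (simp add: power2_eq_square)
qed


lemma sqrt_sum_le:
  assumes "finite A" "\<And>x. x \<in> A \<Longrightarrow> f x \<ge> (0::real)"
  shows "sqrt (\<Sum>x\<in>A. f x) \<le> (\<Sum>x\<in>A. sqrt (f x))"
  using assms
proof (induction A rule: finite_induct)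
  case empty thus ?case by simp
next
  case (insert a A)
  have "sqrt (\<Sum>x\<in>insert a A. f x) = sqrt (f a + (\<Sum>x\<in>A. f x))" using insert by simp
  also have "\<dots> \<le> sqrt (f a) + sqrt (\<Sum>x\<in>A. f x)"
    by (rule sqrt_add_le_add_sqrt) (use insert in \<open>auto intro: sum_nonneg\<close>)
  also have "\<dots> \<le> sqrt (f a) + (\<Sum>x\<in>A. sqrt (f x))" using insert by simp
  also have "\<dots> = (\<Sum>x\<in>insert a A. sqrt (f x))" using insert by simp
  finally show ?case .
qed

lemma rank_sum_rank1:
  fixes f h :: "nat \<Rightarrow> nat \<Rightarrow> real"
  shows "vec_space.rank K (mat K K (\<lambda>(i,j). \<Sum>a<t. f a i * h a j)) \<le> t"
proof (induction t)
  case 0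
  have "mat K K (\<lambda>(i,j). \<Sum>a<0. f a i * h a j) = 0\<^sub>m K K" by (rule eq_matI) auto
  thus ?case using vec_space.rank_0I[of K K] by (simp del: lessThan_0)
next
  case (Suc t)
  have eq: "mat K K (\<lambda>(i,j). \<Sum>a<Suc t. f a i * h a j)
     = mat K K (\<lambda>(i,j). \<Sum>a<t. f a i * h a j) + mat K K (\<lambda>(i,j). f t i * h t j)"
    by (rule eq_matI) auto
  have "vec_space.rank K (mat K K (\<lambda>(i,j). \<Sum>a<Suc t. f a i * h a j))
     \<le> vec_space.rank K (mat K K (\<lambda>(i,j). \<Sum>a<t. f a i * h a j)) + vec_space.rank K (mat K K (\<lambda>(i,j). f t i * h t j))"
    unfolding eq by (rule vec_space.rank_subadditive) auto
  moreover have "vec_space.rank K (mat K K (\<lambda>(i,j). f t i * h t j)) \<le> 1"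
    by (rule vec_space.rank_le_1_product_entries[where f = "f t" and g = "h t"]) auto
  ultimately show ?case using Suc by simp
qed

lemma tail_bound:
  fixes G U V :: "real mat"
  assumes G: "G \<in> carrier_mat K K" and q: "q \<le> K"
    and best: "\<forall>X \<in> carrier_mat K K. vec_space.rank K X \<le> q \<longrightarrow>
                 frob_norm (G - U * transpose_mat V) \<le> frob_norm (G - X)"
  shows "frob_norm (G - U * transpose_mat V) \<le> (\<Sum>j\<in>{q+1..K}. singular_values G ! (j - 1))"
proof -
  define M where "M = transpose_mat G * G"
  have M: "M \<in> carrier_mat K K" unfolding M_def using G by auto
  have Me: "M $$ (i,j) = (\<Sum>l<K. G$$(l,i) * G$$(l,j))" if "i < K" "j < K" for i j
    unfolding M_def using that G by (simp add: scalar_prod_def atLeast0LessThan)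
  have Msym: "M $$ (i,j) = M $$ (j,i)" if "i < K" "j < K" for i j
    using that by (simp add: Me mult.commute)
  obtain \<mu> P where sp: "on_sys K P \<and> (\<forall>a<K. \<forall>i<K. (\<Sum>j<K. M$$(i,j) * P a j) = \<mu> a * P a i)
    \<and> (\<forall>a c. a \<le> c \<longrightarrow> c < K \<longrightarrow> \<mu> c \<le> \<mu> a)"
  proof -
    have "\<exists>\<mu> P. on_sys K P \<and> (\<forall>a<K. \<forall>i<K. (\<Sum>j<K. M$$(i,j) * P a j) = \<mu> a * P a i)
    \<and> (\<forall>a c. a \<le> c \<longrightarrow> c < K \<longrightarrow> \<mu> c \<le> \<mu> a)"
      by (rule spectral_sorted[OF M]) (rule Msym; assumption)
    thus ?thesis by (elim exE) (erule that)
  qed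
  have on: "on_sys K P" using sp by (rule conjunct1)
  have e: "\<forall>a<K. \<forall>i<K. (\<Sum>j<K. M$$(i,j) * P a j) = \<mu> a * P a i" using sp by (elim conjE)
  have mono: "\<forall>a c. a \<le> c \<longrightarrow> c < K \<longrightarrow> \<mu> c \<le> \<mu> a" using sp by (elim conjE)
  have cp: "char_poly M = (\<Prod>a\<leftarrow>map \<mu> [0..<K]. [:-a,1:])"
    by (rule on_sys_char_poly[OF M on]) (use e in auto)
  have sv: "singular_values G = map (\<lambda>a. sqrt (\<mu> a)) [0..<K]"
    by (rule sv_eq[OF cp[unfolded M_def] mono])
  define g where "g a l = (\<Sum>i<K. G$$(l,i) * P a i)" for a l
  have mu_eq: "\<mu> a = (\<Sum>l<K. (g a l)^2)" if a: "a < K" for a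
  proof -
    have "(\<Sum>l<K. (g a l)^2) = (\<Sum>l<K. (\<Sum>i<K. P a i * G$$(l,i)) * (\<Sum>j<K. P a j * G$$(l,j)))"
      unfolding g_def by (simp add: power2_eq_square mult.commute)
    also have "\<dots> = (\<Sum>i<K. \<Sum>j<K. P a i * P a j * (\<Sum>l<K. G$$(l,i) * G$$(l,j)))"
      by (rule sum_combo) auto
    also have "\<dots> = (\<Sum>i<K. P a i * (\<Sum>j<K. M$$(i,j) * P a j))"
    proof (intro sum.cong refl)
      fix i assume "i \<in> {..<K}"
      hence i: "i < K" by simp
      have "(\<Sum>j<K. P a i * P a j * (\<Sum>l<K. G$$(l,i) * G$$(l,j))) = (\<Sum>j<K. P a i * (M$$(i,j) * P a j))"
        by (intro sum.cong refl) (simp add: Me[OF i])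
      thus "(\<Sum>j<K. P a i * P a j * (\<Sum>l<K. G$$(l,i) * G$$(l,j))) = P a i * (\<Sum>j<K. M$$(i,j) * P a j)"
        by (simp only: sum_distrib_left)
    qed
    also have "\<dots> = (\<Sum>i<K. \<mu> a * (P a i * P a i))"
      using e a by (intro sum.cong refl) auto
    also have "\<dots> = \<mu> a" using on a unfolding on_sys_def by (simp add: sum_distrib_left[symmetric])
    finally show ?thesis by simp
  qed
  have mu_nn: "\<mu> a \<ge> 0" if "a < K" for a using mu_eq[OF that] by (simp add: sum_nonneg)
  define X where "X = mat K K (\<lambda>(i,j). \<Sum>a<q. g a i * P a j)"
  have X: "X \<in> carrier_mat K K" unfolding X_def by simp
  have rX: "vec_space.rank K X \<le> q" unfolding X_def by (rule rank_sum_rank1)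
  have coef: "(\<Sum>j<K. P a j * (G$$(i,j) - X$$(i,j))) = (if a < q then 0 else g a i)"
    if ai: "a < K" "i < K" for a i
  proof -
    have "(\<Sum>j<K. P a j * X$$(i,j)) = (\<Sum>j<K. P a j * (\<Sum>b<q. g b i * P b j))"
      using ai by (intro sum.cong refl) (simp add: X_def)
    also have "\<dots> = (\<Sum>b<q. g b i * (\<Sum>j<K. P a j * P b j))"
      by (rule sum_combo1) auto
    also have "\<dots> = (\<Sum>b<q. g b i * (if a = b then 1 else 0))"
    proof (intro sum.cong refl)
      fix b assume "b \<in> {..<q}"
      hence "b < K" using q by simp
      thus "g b i * (\<Sum>j<K. P a j * P b j) = g b i * (if a = b then 1 else 0)"
        using on ai unfolding on_sys_def by simp
    qed
    also have "\<dots> = (if a < q then g a i else 0)"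
      by (simp add: if_distrib sum.delta' cong: if_cong)
    finally have "(\<Sum>j<K. P a j * X$$(i,j)) = (if a < q then g a i else 0)" .
    moreover have "(\<Sum>j<K. P a j * G$$(i,j)) = g a i" unfolding g_def by (simp add: mult.commute)
    ultimately show ?thesis by (simp add: right_diff_distrib sum_subtractf)
  qed
  have row: "(\<Sum>j<K. (norm ((G - X)$$(i,j)))^2) = (\<Sum>a\<in>{q..<K}. (g a i)^2)" if i: "i < K" for i
  proof -
    have "(\<Sum>j<K. (norm ((G - X)$$(i,j)))^2) = (\<Sum>j<K. (G$$(i,j) - X$$(i,j))^2)"
      using i X by (intro sum.cong refl) auto
    also have "\<dots> = (\<Sum>a<K. (\<Sum>j<K. P a j * (G$$(i,j) - X$$(i,j)))^2)"
      by (rule parseval[OF on])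
    also have "\<dots> = (\<Sum>a<K. if a < q then 0 else (g a i)^2)"
      using i by (intro sum.cong refl) (simp add: coef)
    also have "\<dots> = (\<Sum>a\<in>{q..<K}. (g a i)^2)"
    proof -
      have "{..<K} \<inter> - {a. a < q} = {q..<K}" by auto
      thus ?thesis by (simp add: sum.If_cases)
    qed
    finally show ?thesis .
  qed
  have "frob_norm (G - X) = sqrt (\<Sum>i<K. \<Sum>a\<in>{q..<K}. (g a i)^2)"
    unfolding frob_norm_def using X row by simp
  also have "(\<Sum>i<K. \<Sum>a\<in>{q..<K}. (g a i)^2) = (\<Sum>a\<in>{q..<K}. \<mu> a)"
    by (subst sum.swap) (intro sum.cong refl, simp add: mu_eq)
  finally have fX: "frob_norm (G - X) = sqrt (\<Sum>a\<in>{q..<K}. \<mu> a)" .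
  have "frob_norm (G - U * transpose_mat V) \<le> frob_norm (G - X)" using best X rX by blast
  also have "\<dots> \<le> (\<Sum>a\<in>{q..<K}. sqrt (\<mu> a))" unfolding fX
    by (rule sqrt_sum_le) (auto intro: mu_nn)
  also have "\<dots> = (\<Sum>j\<in>{q+1..K}. singular_values G ! (j - 1))"
  proof -
    have "(\<Sum>j\<in>{q+1..K}. singular_values G ! (j - 1)) = (\<Sum>a\<in>{q..<K}. singular_values G ! a)"
    proof (rule sum.reindex_bij_witness[of _ Suc "\<lambda>j. j - 1"])
    qed auto
    also have "\<dots> = (\<Sum>a\<in>{q..<K}. sqrt (\<mu> a))" unfolding sv by (intro sum.cong refl) auto
    finally show ?thesis by simp
  qed
  finally show ?thesis .
qed


lemma frob_L2: "frob_norm M = L2_set (\<lambda>(i,j). norm (M$$(i,j))) ({..<dim_row M} \<times> {..<dim_col M})"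
  unfolding frob_norm_def L2_set_def by (simp add: sum.cartesian_product case_prod_beta)

lemma minkowski_sum:
  fixes h :: "'m \<Rightarrow> 'j \<Rightarrow> 'a::real_normed_vector"
  assumes "finite I"
  shows "L2_set (\<lambda>x. norm (\<Sum>m\<in>I. h m x)) J \<le> (\<Sum>m\<in>I. L2_set (\<lambda>x. norm (h m x)) J)"
  using assms
proof (induction I rule: finite_induct)
  case empty thus ?case by (simp add: L2_set_0')
next
  case (insert a I)
  have "L2_set (\<lambda>x. norm (\<Sum>m\<in>insert a I. h m x)) J
      = L2_set (\<lambda>x. norm (h a x + (\<Sum>m\<in>I. h m x))) J" using insert by simp
  also have "\<dots> \<le> L2_set (\<lambda>x. norm (h a x) + norm (\<Sum>m\<in>I. h m x)) J"
    by (rule L2_set_mono) (auto intro: norm_triangle_ineq)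
  also have "\<dots> \<le> L2_set (\<lambda>x. norm (h a x)) J + L2_set (\<lambda>x. norm (\<Sum>m\<in>I. h m x)) J"
    by (rule L2_set_triangle_ineq)
  also have "\<dots> \<le> L2_set (\<lambda>x. norm (h a x)) J + (\<Sum>m\<in>I. L2_set (\<lambda>x. norm (h m x)) J)"
    using insert by simp
  also have "\<dots> = (\<Sum>m\<in>insert a I. L2_set (\<lambda>x. norm (h m x)) J)" using insert by simp
  finally show ?case .
qed

lemma vn_smult: "vec_norm2 (c \<cdot>\<^sub>v (v :: complex vec)) = cmod c * vec_norm2 v"
proof -
  have "vec_norm2 (c \<cdot>\<^sub>v v) = sqrt ((cmod c)^2 * (\<Sum>i<dim_vec v. (cmod (v $ i))^2))"
    unfolding vec_norm2_def by (simp add: norm_mult power_mult_distrib sum_distrib_left)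
  also have "\<dots> = cmod c * vec_norm2 v" unfolding vec_norm2_def real_sqrt_mult by simp
  finally show ?thesis .
qed

lemma vn_cs:
  fixes T :: "complex mat"
  assumes T: "T \<in> carrier_mat n K" and y: "y \<in> carrier_vec K"
  shows "vec_norm2 (T *\<^sub>v y) \<le> frob_norm T * vec_norm2 y"
proof -
  have row: "(cmod ((T *\<^sub>v y) $ i))^2 \<le> (\<Sum>l<K. (cmod (T$$(i,l)))^2) * (\<Sum>l<K. (cmod (y$l))^2)"
    if i: "i < n" for i
  proof -
    have "cmod ((T *\<^sub>v y) $ i) = cmod (\<Sum>l<K. T$$(i,l) * y$l)" using mult_mat_vec_sum[OF T y i] by simp
    also have "\<dots> \<le> (\<Sum>l<K. \<bar>cmod (T$$(i,l))\<bar> * \<bar>cmod (y$l)\<bar>)"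
      by (rule order_trans[OF norm_sum]) (simp add: norm_mult)
    also have "\<dots> \<le> L2_set (\<lambda>l. cmod (T$$(i,l))) {..<K} * L2_set (\<lambda>l. cmod (y$l)) {..<K}"
      by (rule L2_set_mult_ineq)
    finally have le: "cmod ((T *\<^sub>v y) $ i) \<le> L2_set (\<lambda>l. cmod (T$$(i,l))) {..<K} * L2_set (\<lambda>l. cmod (y$l)) {..<K}" .
    have "(cmod ((T *\<^sub>v y) $ i))^2 \<le> (L2_set (\<lambda>l. cmod (T$$(i,l))) {..<K} * L2_set (\<lambda>l. cmod (y$l)) {..<K})^2"
      by (rule power_mono[OF le]) simp
    also have "\<dots> = (\<Sum>l<K. (cmod (T$$(i,l)))^2) * (\<Sum>l<K. (cmod (y$l))^2)"
      unfolding power_mult_distrib L2_set_def by (simp add: sum_nonneg)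
    finally show ?thesis .
  qed
  have "(\<Sum>i<n. (cmod ((T *\<^sub>v y) $ i))^2) \<le> (\<Sum>i<n. (\<Sum>l<K. (cmod (T$$(i,l)))^2) * (\<Sum>l<K. (cmod (y$l))^2))"
    by (rule sum_mono) (use row in auto)
  also have "\<dots> = (\<Sum>i<n. \<Sum>l<K. (cmod (T$$(i,l)))^2) * (\<Sum>l<K. (cmod (y$l))^2)"
    by (simp add: sum_distrib_right)
  finally have le: "(\<Sum>i<n. (cmod ((T *\<^sub>v y) $ i))^2) \<le> (\<Sum>i<n. \<Sum>l<K. (cmod (T$$(i,l)))^2) * (\<Sum>l<K. (cmod (y$l))^2)" .
  have "vec_norm2 (T *\<^sub>v y) = sqrt (\<Sum>i<n. (cmod ((T *\<^sub>v y) $ i))^2)"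
    unfolding vec_norm2_def using T by simp
  also have "\<dots> \<le> sqrt ((\<Sum>i<n. \<Sum>l<K. (cmod (T$$(i,l)))^2) * (\<Sum>l<K. (cmod (y$l))^2))"
    using le by simp
  also have "\<dots> = frob_norm T * vec_norm2 y"
    unfolding frob_norm_def vec_norm2_def real_sqrt_mult using T y by simp
  finally show ?thesis .
qed

definition spec_set :: "complex mat \<Rightarrow> real set" where
  "spec_set M = {vec_norm2 (M *\<^sub>v x) | x. x \<in> carrier_vec (dim_col M) \<and> vec_norm2 x \<le> 1}"

lemma spec_set_bdd:
  assumes T: "T \<in> carrier_mat n K"
  shows "bdd_above (spec_set T)" "0 \<in> spec_set T"
proof -
  show "bdd_above (spec_set T)" unfolding bdd_above_def spec_set_def
  proof (intro exI[of _ "frob_norm T"] ballI)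
    fix r assume "r \<in> {vec_norm2 (T *\<^sub>v x) |x. x \<in> carrier_vec (dim_col T) \<and> vec_norm2 x \<le> 1}"
    then obtain x where x: "r = vec_norm2 (T *\<^sub>v x)" "x \<in> carrier_vec K" "vec_norm2 x \<le> 1"
      using T by auto
    have "r \<le> frob_norm T * vec_norm2 x" using vn_cs[OF T x(2)] x(1) by simp
    also have "\<dots> \<le> frob_norm T * 1"
      by (rule mult_left_mono[OF x(3)]) (simp add: frob_norm_def sum_nonneg)
    finally show "r \<le> frob_norm T" by simp
  qed
  have "vec_norm2 (T *\<^sub>v 0\<^sub>v K) = 0" using T unfolding vec_norm2_def by simp
  moreover have "vec_norm2 (0\<^sub>v K :: complex vec) = 0" unfolding vec_norm2_def by simp
  ultimately show "0 \<in> spec_set T" unfolding spec_set_def using T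
    by (intro CollectI exI[of _ "0\<^sub>v K"]) auto
qed

lemma spec_nonneg:
  assumes T: "T \<in> carrier_mat n K"
  shows "spec_norm T \<ge> 0"
proof -
  have "spec_norm T = Sup (spec_set T)" unfolding spec_norm_def spec_set_def ..
  thus ?thesis using cSup_upper[OF spec_set_bdd(2)[OF T] spec_set_bdd(1)[OF T]] by simp
qed

lemma vn_spec:
  assumes T: "T \<in> carrier_mat n K" and x: "x \<in> carrier_vec K"
  shows "vec_norm2 (T *\<^sub>v x) \<le> spec_norm T * vec_norm2 x"
proof (cases "vec_norm2 x = 0")
  case True
  hence "\<forall>i\<in>{..<K}. (cmod (x $ i))^2 = 0" using x unfolding vec_norm2_def
    by (subst sum_nonneg_eq_0_iff[symmetric]) auto
  hence "\<And>i. i < K \<Longrightarrow> x $ i = 0" by simp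
  hence "x = 0\<^sub>v K" using x by (intro eq_vecI) auto
  hence "vec_norm2 (T *\<^sub>v x) = 0" using T unfolding vec_norm2_def by simp
  thus ?thesis using True by simp
next
  case False
  define r where "r = vec_norm2 x"
  have "r \<ge> 0" unfolding r_def vec_norm2_def by (simp add: sum_nonneg)
  hence r: "r > 0" using False unfolding r_def by simp
  define y where "y = complex_of_real (1 / r) \<cdot>\<^sub>v x"
  have y: "y \<in> carrier_vec K" unfolding y_def using x by simp
  have vy: "vec_norm2 y = 1" unfolding y_def vn_smult r_def[symmetric] using r by (simp add: norm_divide)
  have Ty: "T *\<^sub>v y = complex_of_real (1 / r) \<cdot>\<^sub>v (T *\<^sub>v x)"
    unfolding y_def by (rule mult_mat_vec[OF T x])
  have "vec_norm2 (T *\<^sub>v y) \<in> spec_set T" unfolding spec_set_def using T y vy by auto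
  hence "vec_norm2 (T *\<^sub>v y) \<le> spec_norm T"
    unfolding spec_norm_def spec_set_def[symmetric] by (rule cSup_upper[OF _ spec_set_bdd(1)[OF T]])
  hence "vec_norm2 (T *\<^sub>v x) / r \<le> spec_norm T" unfolding Ty vn_smult using r by (simp add: norm_divide)
  thus ?thesis unfolding r_def[symmetric] using r by (simp add: field_simps)
qed


lemma mm_entry:
  assumes "A \<in> carrier_mat a b" "B \<in> carrier_mat b c" "i < a" "j < c"
  shows "(A * B) $$ (i,j) = (\<Sum>l<b. A$$(i,l) * B$$(l,j))"
  using assms by (simp add: scalar_prod_def atLeast0LessThan)

lemma mdiag_entry:
  fixes X :: "'a::comm_ring_1 mat"
  assumes "X \<in> carrier_mat a b" "i < a" "j < b"
  shows "(X * mat_diag b f) $$ (i,j) = X$$(i,j) * f j"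
proof -
  have "(X * mat_diag b f) $$ (i,j) = (\<Sum>l<b. X$$(i,l) * (if l = j then f j else 0))"
    unfolding mm_entry[OF assms(1) mat_diag_dim assms(2,3)]
    by (intro sum.cong refl) (use assms in \<open>auto simp: mat_diag_def\<close>)
  also have "\<dots> = (\<Sum>l<b. if l = j then X$$(i,j) * f j else 0)"
    by (intro sum.cong refl) auto
  also have "\<dots> = X$$(i,j) * f j" using assms by (simp add: sum.delta)
  finally show ?thesis .
qed

lemma frob_mult:
  assumes T: "T \<in> carrier_mat n K" and B: "B \<in> carrier_mat K L"
  shows "frob_norm (T * B) \<le> spec_norm T * frob_norm B"
proof -
  have ent: "(T * B) $$ (i,c) = (T *\<^sub>v col B c) $ i" if "i < n" "c < L" for i c
    using that T B by simp
  have "frob_norm (T * B) = sqrt (\<Sum>i<n. \<Sum>c<L. (cmod ((T *\<^sub>v col B c) $ i))^2)"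
    unfolding frob_norm_def using T B ent by simp
  also have "(\<Sum>i<n. \<Sum>c<L. (cmod ((T *\<^sub>v col B c) $ i))^2) = (\<Sum>c<L. (vec_norm2 (T *\<^sub>v col B c))^2)"
    by (subst sum.swap) (intro sum.cong refl, use T in \<open>simp add: vec_norm2_def sum_nonneg\<close>)
  also have "\<dots> \<le> (\<Sum>c<L. (spec_norm T * vec_norm2 (col B c))^2)"
  proof (rule sum_mono)
    fix c assume "c \<in> {..<L}"
    hence cB: "col B c \<in> carrier_vec K" using B by simp
    show "(vec_norm2 (T *\<^sub>v col B c))^2 \<le> (spec_norm T * vec_norm2 (col B c))^2"
      by (rule power_mono[OF vn_spec[OF T cB]]) (simp add: vec_norm2_def sum_nonneg)
  qed
  also have "\<dots> = (spec_norm T)^2 * (\<Sum>c<L. \<Sum>l<K. (cmod (B$$(l,c)))^2)"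
    unfolding power_mult_distrib sum_distrib_left
    by (intro sum.cong refl, use B in \<open>simp add: vec_norm2_def sum_nonneg sum_distrib_left\<close>)
  also have "(\<Sum>c<L. \<Sum>l<K. (cmod (B$$(l,c)))^2) = (\<Sum>l<K. \<Sum>c<L. (cmod (B$$(l,c)))^2)"
    by (rule sum.swap)
  finally have le: "frob_norm (T * B) \<le> sqrt ((spec_norm T)^2 * (\<Sum>l<K. \<Sum>c<L. (cmod (B$$(l,c)))^2))"
    by simp
  also have "\<dots> = spec_norm T * frob_norm B"
    unfolding real_sqrt_mult frob_norm_def using B spec_nonneg[OF T] by simp
  finally show ?thesis .
qed

lemma hadamard_bound:
  fixes E :: "real mat" and F :: "complex mat"
  assumes E: "E \<in> carrier_mat K K" and F: "F \<in> carrier_mat K K"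
  shows "frob_norm (mat K K (\<lambda>(l,c). complex_of_real (E$$(l,c)) * F$$(l,c))) \<le> frob_norm E * frob_norm F"
proof -
  define s where "s = (\<Sum>i<K. \<Sum>j<K. (norm (E$$(i,j)))^2)"
  have sE: "(norm (E$$(l,c)))^2 \<le> s" if "l < K" "c < K" for l c
  proof -
    have "(norm (E$$(l,c)))^2 \<le> (\<Sum>j<K. (norm (E$$(l,j)))^2)"
      by (rule member_le_sum) (use that in auto)
    also have "\<dots> \<le> s" unfolding s_def
      by (rule member_le_sum[of l "{..<K}" "\<lambda>i. \<Sum>j<K. (norm (E$$(i,j)))^2"]) (use that in \<open>auto intro: sum_nonneg\<close>)
    finally show ?thesis .
  qed
  have "(\<Sum>l<K. \<Sum>c<K. (cmod (complex_of_real (E$$(l,c)) * F$$(l,c)))^2)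
      \<le> (\<Sum>l<K. \<Sum>c<K. s * (cmod (F$$(l,c)))^2)"
  proof (intro sum_mono)
    fix l c assume "l \<in> {..<K}" "c \<in> {..<K}"
    hence "(norm (E$$(l,c)))^2 \<le> s" using sE by auto
    thus "(cmod (complex_of_real (E$$(l,c)) * F$$(l,c)))^2 \<le> s * (cmod (F$$(l,c)))^2"
      unfolding norm_mult power_mult_distrib by (intro mult_right_mono) auto
  qed
  also have "\<dots> = s * (\<Sum>l<K. \<Sum>c<K. (cmod (F$$(l,c)))^2)" by (simp add: sum_distrib_left)
  finally have le: "(\<Sum>l<K. \<Sum>c<K. (cmod (complex_of_real (E$$(l,c)) * F$$(l,c)))^2)
      \<le> s * (\<Sum>l<K. \<Sum>c<K. (cmod (F$$(l,c)))^2)" .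
  have "frob_norm (mat K K (\<lambda>(l,c). complex_of_real (E$$(l,c)) * F$$(l,c)))
     = sqrt (\<Sum>l<K. \<Sum>c<K. (cmod (complex_of_real (E$$(l,c)) * F$$(l,c)))^2)"
    unfolding frob_norm_def by simp
  also have "\<dots> \<le> sqrt (s * (\<Sum>l<K. \<Sum>c<K. (cmod (F$$(l,c)))^2))" using le by simp
  also have "\<dots> = frob_norm E * frob_norm F"
    unfolding real_sqrt_mult frob_norm_def s_def using E F by simp
  finally show ?thesis .
qed


lemma entry_S:
  fixes W :: "complex mat" and U V :: "real mat"
  assumes W: "W \<in> carrier_mat n K" and Fm: "Fm \<in> carrier_mat K K"
    and U: "U \<in> carrier_mat K q" and V: "V \<in> carrier_mat K q" and r: "r < n" and c: "c < K"
  shows "(mat_sum n K {..<q} (\<lambda>j. W * mat_diag K (\<lambda>i. complex_of_real (U $$ (i, j))) * Fm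
            * mat_diag K (\<lambda>i. complex_of_real (V $$ (i, j))))) $$ (r,c)
       = (\<Sum>l<K. W$$(r,l) * (complex_of_real ((U * transpose_mat V)$$(l,c)) * Fm$$(l,c)))"
proof -
  define Du where "Du j = mat_diag K (\<lambda>i. complex_of_real (U $$ (i, j)))" for j
  define Dv where "Dv j = mat_diag K (\<lambda>i. complex_of_real (V $$ (i, j)))" for j
  have WDu: "W * Du j \<in> carrier_mat n K" for j unfolding Du_def using W by simp
  have WDuF: "W * Du j * Fm \<in> carrier_mat n K" for j using mult_carrier_mat[OF WDu Fm] .
  have one: "(W * Du j * Fm * Dv j) $$ (r,c)
      = (\<Sum>l<K. W$$(r,l) * (complex_of_real (U$$(l,j) * V$$(c,j)) * Fm$$(l,c)))" for j
  proof -
    have "(W * Du j * Fm * Dv j) $$ (r,c) = (W * Du j * Fm) $$ (r,c) * complex_of_real (V $$ (c, j))"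
      unfolding Dv_def by (rule mdiag_entry[OF WDuF r c])
    also have "(W * Du j * Fm) $$ (r,c) = (\<Sum>l<K. (W * Du j)$$(r,l) * Fm$$(l,c))"
      by (rule mm_entry[OF WDu Fm r c])
    also have "\<dots> = (\<Sum>l<K. W$$(r,l) * complex_of_real (U$$(l,j)) * Fm$$(l,c))"
      by (intro sum.cong refl) (simp add: Du_def mdiag_entry[OF W r])
    finally show ?thesis by (simp add: sum_distrib_left sum_distrib_right mult.commute mult.left_commute)
  qed
  have "(mat_sum n K {..<q} (\<lambda>j. W * Du j * Fm * Dv j)) $$ (r,c)
      = (\<Sum>j<q. \<Sum>l<K. W$$(r,l) * (complex_of_real (U$$(l,j) * V$$(c,j)) * Fm$$(l,c)))"
    unfolding mat_sum_def using r c one by simp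
  also have "\<dots> = (\<Sum>l<K. \<Sum>j<q. W$$(r,l) * (complex_of_real (U$$(l,j) * V$$(c,j)) * Fm$$(l,c)))"
    by (rule sum.swap)
  also have "\<dots> = (\<Sum>l<K. W$$(r,l) * (complex_of_real ((U * transpose_mat V)$$(l,c)) * Fm$$(l,c)))"
  proof (intro sum.cong refl)
    fix l assume "l \<in> {..<K}"
    hence l: "l < K" by simp
    have "(U * transpose_mat V)$$(l,c) = (\<Sum>j<q. U$$(l,j) * V$$(c,j))"
      using U V l c by (simp add: scalar_prod_def atLeast0LessThan)
    thus "(\<Sum>j<q. W$$(r,l) * (complex_of_real (U$$(l,j) * V$$(c,j)) * Fm$$(l,c)))
        = W$$(r,l) * (complex_of_real ((U * transpose_mat V)$$(l,c)) * Fm$$(l,c))"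
      by (simp add: sum_distrib_left sum_distrib_right of_real_sum)
  qed
  finally show ?thesis unfolding Du_def Dv_def .
qed

lemma entry_m:
  fixes Am W :: "complex mat" and G U V :: "real mat"
  assumes Am: "Am \<in> carrier_mat n n" and W: "W \<in> carrier_mat n K" and Fm: "Fm \<in> carrier_mat K K"
    and G: "G \<in> carrier_mat K K"
    and U: "U \<in> carrier_mat K q" and V: "V \<in> carrier_mat K q" and i: "i < n" and c: "c < K"
  shows "(Am * W * hadamard (map_mat complex_of_real G) Fm) $$ (i,c)
      - (Am * mat_sum n K {..<q} (\<lambda>j. W * mat_diag K (\<lambda>i. complex_of_real (U $$ (i, j))) * Fm
            * mat_diag K (\<lambda>i. complex_of_real (V $$ (i, j))))) $$ (i,c)
    = (Am * W * mat K K (\<lambda>(l,c). complex_of_real ((G - U * transpose_mat V)$$(l,c)) * Fm$$(l,c))) $$ (i,c)"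
proof -
  define S where "S = mat_sum n K {..<q} (\<lambda>j. W * mat_diag K (\<lambda>i. complex_of_real (U $$ (i, j))) * Fm
            * mat_diag K (\<lambda>i. complex_of_real (V $$ (i, j))))"
  define UV where "UV = U * transpose_mat V"
  have UVc: "UV \<in> carrier_mat K K" unfolding UV_def using U V by simp
  have S: "S \<in> carrier_mat n K" unfolding S_def mat_sum_def by simp
  have AW: "Am * W \<in> carrier_mat n K" using Am W by simp
  have H: "hadamard (map_mat complex_of_real G) Fm \<in> carrier_mat K K" unfolding hadamard_def using G by simp
  have t1: "(Am * W * hadamard (map_mat complex_of_real G) Fm) $$ (i,c)
      = (\<Sum>l<K. (Am * W)$$(i,l) * (complex_of_real (G$$(l,c)) * Fm$$(l,c)))"
    unfolding mm_entry[OF AW H i c]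
    by (intro sum.cong refl) (use G c in \<open>simp add: hadamard_def\<close>)
  have "(Am * S) $$ (i,c) = (\<Sum>r<n. Am$$(i,r) * S$$(r,c))" by (rule mm_entry[OF Am S i c])
  also have "\<dots> = (\<Sum>r<n. Am$$(i,r) * (\<Sum>l<K. W$$(r,l) * (complex_of_real (UV$$(l,c)) * Fm$$(l,c))))"
    by (intro sum.cong refl) (simp add: S_def UV_def entry_S[OF W Fm U V _ c])
  also have "\<dots> = (\<Sum>l<K. (\<Sum>r<n. Am$$(i,r) * W$$(r,l)) * (complex_of_real (UV$$(l,c)) * Fm$$(l,c)))"
    by (simp add: sum_distrib_left sum_distrib_right mult.assoc, rule sum.swap)
  also have "\<dots> = (\<Sum>l<K. (Am * W)$$(i,l) * (complex_of_real (UV$$(l,c)) * Fm$$(l,c)))"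
    by (intro sum.cong refl) (simp add: mm_entry[OF Am W i])
  finally have t2: "(Am * S) $$ (i,c) = \<dots>" .
  have KE: "mat K K (\<lambda>(l,c). complex_of_real ((G - UV)$$(l,c)) * Fm$$(l,c)) \<in> carrier_mat K K" by simp
  have t3: "(Am * W * mat K K (\<lambda>(l,c). complex_of_real ((G - UV)$$(l,c)) * Fm$$(l,c))) $$ (i,c)
     = (\<Sum>l<K. (Am * W)$$(i,l) * (complex_of_real (G$$(l,c) - UV$$(l,c)) * Fm$$(l,c)))"
    unfolding mm_entry[OF AW KE i c]
    by (intro sum.cong refl) (use G UVc c in simp)
  show ?thesis unfolding S_def[symmetric] UV_def[symmetric] t1 t2 t3
    by (simp add: sum_subtractf[symmetric] algebra_simps of_real_diff)
qed


lemma frob_L2': "frob_norm M = L2_set (\<lambda>x. norm (M$$x)) ({..<dim_row M} \<times> {..<dim_col M})"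
  unfolding frob_L2 by (rule L2_set_cong) auto

lemma main_gen:
  fixes A :: "nat \<Rightarrow> complex mat" and W :: "complex mat" and G U V :: "real mat"
    and F :: "nat \<Rightarrow> complex mat"
  assumes I: "finite I" and A_dim: "\<forall>m\<in>I. A m \<in> carrier_mat n n" and W: "W \<in> carrier_mat n K"
    and q: "q \<le> K" and U: "U \<in> carrier_mat K q" and V: "V \<in> carrier_mat K q"
    and G: "G \<in> carrier_mat K K" and Fc: "\<forall>m\<in>I. F m \<in> carrier_mat K K"
    and best: "\<forall>X \<in> carrier_mat K K. vec_space.rank K X \<le> q \<longrightarrow>
                 frob_norm (G - U * transpose_mat V) \<le> frob_norm (G - X)"
  shows "frob_norm
           (mat_sum n K I (\<lambda>m. A m * W * hadamard (map_mat complex_of_real G) (F m))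
            - mat_sum n K I
              (\<lambda>m. A m * mat_sum n K {..<q}
                 (\<lambda>j. W * mat_diag K (\<lambda>i. complex_of_real (U $$ (i, j))) * F m
                       * mat_diag K (\<lambda>i. complex_of_real (V $$ (i, j))))))
         \<le> (\<Sum>m\<in>I. spec_norm (A m * W) * frob_norm (F m))
            * (\<Sum>j\<in>{q+1..K}. singular_values G ! (j - 1))"
proof -
  define E where "E = G - U * transpose_mat V"
  have UVt: "U * transpose_mat V \<in> carrier_mat K K" using U V by simp
  have E: "E \<in> carrier_mat K K" unfolding E_def by (rule minus_carrier_mat[OF UVt])
  define Km where "Km m = mat K K (\<lambda>(l,c). complex_of_real (E$$(l,c)) * F m $$ (l,c))" for m
  have Kmc: "Km m \<in> carrier_mat K K" for m unfolding Km_def by simp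
  define Z1 where "Z1 = mat_sum n K I (\<lambda>m. A m * W * hadamard (map_mat complex_of_real G) (F m))"
  define Z2 where "Z2 = mat_sum n K I
              (\<lambda>m. A m * mat_sum n K {..<q}
                 (\<lambda>j. W * mat_diag K (\<lambda>i. complex_of_real (U $$ (i, j))) * F m
                       * mat_diag K (\<lambda>i. complex_of_real (V $$ (i, j)))))"
  define D where "D = Z1 - Z2"
  define J where "J = {..<n} \<times> {..<K}"
  have Dd: "dim_row D = n" "dim_col D = K" unfolding D_def Z2_def mat_sum_def by simp_all
  have De: "D $$ x = (\<Sum>m\<in>I. (A m * W * Km m) $$ x)" if xJ: "x \<in> J" for x
  proof -
    obtain i c where x: "x = (i,c)" "i<n" "c<K" using xJ unfolding J_def by (cases x) auto
    have "D $$ (i,c) = Z1 $$ (i,c) - Z2 $$ (i,c)" unfolding D_def using x by (simp add: Z2_def mat_sum_def)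
    also have "\<dots> = (\<Sum>m\<in>I. (A m * W * hadamard (map_mat complex_of_real G) (F m)) $$ (i,c)
        - (A m * mat_sum n K {..<q}
                 (\<lambda>j. W * mat_diag K (\<lambda>i. complex_of_real (U $$ (i, j))) * F m
                       * mat_diag K (\<lambda>i. complex_of_real (V $$ (i, j))))) $$ (i,c))"
      unfolding Z1_def Z2_def mat_sum_def using x by (simp add: sum_subtractf)
    also have "\<dots> = (\<Sum>m\<in>I. (A m * W * Km m) $$ (i,c))"
    proof (intro sum.cong refl)
      fix m assume "m \<in> I"
      hence Am: "A m \<in> carrier_mat n n" and Fm: "F m \<in> carrier_mat K K" using A_dim Fc by auto
      show "(A m * W * hadamard (map_mat complex_of_real G) (F m)) $$ (i,c)
        - (A m * mat_sum n K {..<q}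
                 (\<lambda>j. W * mat_diag K (\<lambda>i. complex_of_real (U $$ (i, j))) * F m
                       * mat_diag K (\<lambda>i. complex_of_real (V $$ (i, j))))) $$ (i,c)
         = (A m * W * Km m) $$ (i,c)"
        unfolding Km_def E_def by (rule entry_m[OF Am W Fm G U V x(2,3)])
    qed
    finally show ?thesis using x by simp
  qed
  have TW: "A m * W \<in> carrier_mat n K" if "m \<in> I" for m using A_dim W that by auto
  have "frob_norm D = L2_set (\<lambda>x. norm (D $$ x)) J" unfolding frob_L2' Dd J_def ..
  also have "\<dots> = L2_set (\<lambda>x. norm (\<Sum>m\<in>I. (A m * W * Km m) $$ x)) J"
    by (rule L2_set_cong) (auto simp: De)
  also have "\<dots> \<le> (\<Sum>m\<in>I. L2_set (\<lambda>x. norm ((A m * W * Km m) $$ x)) J)"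
    by (rule minkowski_sum[OF I])
  also have "\<dots> = (\<Sum>m\<in>I. frob_norm (A m * W * Km m))"
  proof (intro sum.cong refl)
    fix m assume m: "m \<in> I"
    have "A m * W * Km m \<in> carrier_mat n K" using TW[OF m] Kmc by simp
    hence "dim_row (A m * W * Km m) = n" "dim_col (A m * W * Km m) = K" by auto
    thus "L2_set (\<lambda>x. norm ((A m * W * Km m) $$ x)) J = frob_norm (A m * W * Km m)"
      unfolding frob_L2' J_def by (simp only:)
  qed
  also have "\<dots> \<le> (\<Sum>m\<in>I. spec_norm (A m * W) * frob_norm (Km m))"
    by (rule sum_mono) (rule frob_mult[OF TW Kmc])
  also have "\<dots> \<le> (\<Sum>m\<in>I. spec_norm (A m * W) * (frob_norm E * frob_norm (F m)))"
  proof (rule sum_mono)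
    fix m assume m: "m \<in> I"
    have "frob_norm (Km m) \<le> frob_norm E * frob_norm (F m)"
      unfolding Km_def by (rule hadamard_bound[OF E]) (use Fc m in auto)
    thus "spec_norm (A m * W) * frob_norm (Km m) \<le> spec_norm (A m * W) * (frob_norm E * frob_norm (F m))"
      by (rule mult_left_mono) (rule spec_nonneg[OF TW[OF m]])
  qed
  also have "\<dots> = frob_norm E * (\<Sum>m\<in>I. spec_norm (A m * W) * frob_norm (F m))"
    by (simp add: sum_distrib_left algebra_simps)
  also have "\<dots> \<le> (\<Sum>j\<in>{q+1..K}. singular_values G ! (j - 1)) * (\<Sum>m\<in>I. spec_norm (A m * W) * frob_norm (F m))"
  proof (rule mult_right_mono)
    show "frob_norm E \<le> (\<Sum>j\<in>{q+1..K}. singular_values G ! (j - 1))"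
      unfolding E_def by (rule tail_bound[OF G q best])
    show "0 \<le> (\<Sum>m\<in>I. spec_norm (A m * W) * frob_norm (F m))"
    proof (rule sum_nonneg)
      fix m assume m: "m \<in> I"
      have "frob_norm (F m) \<ge> 0" unfolding frob_norm_def by (simp add: sum_nonneg)
      thus "0 \<le> spec_norm (A m * W) * frob_norm (F m)"
        using spec_nonneg[OF TW[OF m]] by simp
    qed
  qed
  finally show ?thesis unfolding D_def Z1_def Z2_def by (simp add: mult.commute)
qed

theorem theorem6:
  fixes f :: "nat \<Rightarrow> complex \<Rightarrow> complex"
    and A :: "nat \<Rightarrow> complex mat"
    and W :: "complex mat"
    and U V :: "real mat"
    and n k p q :: nat and r :: real
  assumes r: "r > 0"
    and f_an: "\<forall>m\<in>{1..p}. f m analytic_on ball 0 r"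
    and A_dim: "\<forall>m\<in>{1..p}. A m \<in> carrier_mat n n"
    and k: "k \<ge> 1"
    and W_dim: "W \<in> carrier_mat n (k + 1)"
    and q: "1 \<le> q" "q \<le> k + 1"
    and UV_dim: "U \<in> carrier_mat (k + 1) q" "V \<in> carrier_mat (k + 1) q"
    and best: "\<forall>X \<in> carrier_mat (k + 1) (k + 1). vec_space.rank (k + 1) X \<le> q \<longrightarrow>
                 frob_norm (Gmat (k + 1) - U * transpose_mat V) \<le> frob_norm (Gmat (k + 1) - X)"
  shows "frob_norm
           (mat_sum n (k + 1) {1..p}
              (\<lambda>m. A m * W * hadamard (map_mat complex_of_real (Gmat (k + 1))) (Fmat (k + 1) (f m)))
            - mat_sum n (k + 1) {1..p}
              (\<lambda>m. A m * mat_sum n (k + 1) {..<q}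
                 (\<lambda>j. W * mat_diag (k + 1) (\<lambda>i. complex_of_real (U $$ (i, j))) * Fmat (k + 1) (f m)
                       * mat_diag (k + 1) (\<lambda>i. complex_of_real (V $$ (i, j))))))
         \<le> (\<Sum>m\<in>{1..p}. spec_norm (A m * W) * frob_norm (Fmat (k + 1) (f m)))
            * (\<Sum>j\<in>{q+1..k+1}. singular_values (Gmat (k + 1)) ! (j - 1))"
proof -
  have G: "Gmat (k + 1) \<in> carrier_mat (k + 1) (k + 1)" unfolding Gmat_def by simp
  have Fc: "\<forall>m\<in>{1..p}. Fmat (k + 1) (f m) \<in> carrier_mat (k + 1) (k + 1)" unfolding Fmat_def by simp
  show ?thesis
    by (rule main_gen[where F = "\<lambda>m. Fmat (k + 1) (f m)", OF finite_atLeastAtMost A_dim W_dim q(2)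
          UV_dim G Fc best])
qed

end
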